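(* Let $\mathbf{F}\in\mathbb{K}[x]^{n\times n}$ be nonsingular and column reduced, let $\mathbf{H}$ be its Hermite normal form, let $\vec{s}=[s_1,\dots,s_n]$ with $s_i=\deg h_{ii}$, let $s_{\max}=\max_i s_i$ and $\vec{u}=[s_{\max},\dots,s_{\max}]\in\mathbb{Z}^n$. Suppose $\mathbf{N}\in\mathbb{K}[x]^{2n\times n}$ is a $[-\vec{u},-\vec{s}]$-minimal right kernel basis of $[\mathbf{F},-I]\in\mathbb{K}[x]^{n\times 2n}$, partitioned as $\mathbf{N}=\begin{bmatrix}\mathbf{N}_u\\ \mathbf{N}_d\end{bmatrix}$ with $\mathbf{N}_u,\mathbf{N}_d\in\mathbb{K}[x]^{n\times n}$. Then $\mathbf{N}_u$ is unimodular, and $\mathbf{N}_d$ has row degrees $\vec{s}$ (the $i$-th row of $\mathbf{N}_d$ has degree $s_i$) and is unimodularly equivalent to $\mathbf{H}$, i.e. $\mathbf{N}_d=\mathbf{H}\mathbf{V}$ for some unimodular $\mathbf{V}$.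
   Context: $\mathbb{K}$ is a field. Unimodular: square polynomial matrix with determinant a nonzero constant. Hermite normal form of nonsingular $\mathbf{F}$: the unique $\mathbf{H}=\mathbf{F}\mathbf{U}$, $\mathbf{U}$ unimodular, with $\mathbf{H}=[h_{ij}]$ lower triangular, $h_{ii}$ monic, and $\deg h_{ij}<\deg h_{ii}$ for $j<i$. For a column vector $\mathbf{p}=[p_1,\dots,p_m]^T$ and shift $\vec{t}\in\mathbb{Z}^m$, the $\vec t$-column degree is $\mathrm{cdeg}_{\vec t}\,\mathbf{p}=\max_i(\deg p_i+t_i)$; for a matrix it is the list of shifted degrees of its columns. Writing $x^{\vec t}=\mathrm{diag}(x^{t_1},\dots,x^{t_m})$, a matrix $\mathbf{P}$ with $\vec{c}=\mathrm{cdeg}\,\mathbf{P}$ is column reduced if the matrix whose $(i,j)$ entry is the coefficient of $x^{c_j}$ in $p_{ij}$ has full column rank; $\mathbf{P}$ is $\vec t$-column reduced if $x^{\vec t}\mathbf{P}$ is column reduced. A right kernel basis of $\mathbf{A}\in\mathbb{K}[x]^{m\times k}$ is a full-rank matrix $\mathbf{N}$ with $\mathbf{A}\mathbf{N}=0$ whose columns generate the $\mathbb{K}[x]$-module $\{\mathbf{q}\in\mathbb{K}[x]^k:\mathbf{A}\mathbf{q}=0\}$; it is $\vec t$-minimal if it is moreover $\vec t$-column reduced. *)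

theory Defs
  imports "HOL-Computational_Algebra.Polynomial" "Jordan_Normal_Form.Determinant"
begin

definition unimodular :: "'a::field poly mat \<Rightarrow> bool" where
  "unimodular U \<longleftrightarrow> square_mat U \<and> det U \<noteq> 0 \<and> degree (det U) = 0"

definition nonsingular :: "'a::field poly mat \<Rightarrow> bool" where
  "nonsingular F \<longleftrightarrow> square_mat F \<and> det F \<noteq> 0"

definition is_hermite_form :: "'a::field poly mat \<Rightarrow> bool" where
  "is_hermite_form H \<longleftrightarrow> square_mat H \<and>
     (\<forall>i<dim_row H. \<forall>j<dim_col H. i < j \<longrightarrow> H $$ (i,j) = 0) \<and>
     (\<forall>i<dim_row H. lead_coeff (H $$ (i,i)) = 1) \<and>
     (\<forall>i<dim_row H. \<forall>j<i. H $$ (i,j) = 0 \<or> degree (H $$ (i,j)) < degree (H $$ (i,i)))"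

definition hermite_normal_form_of :: "'a::field poly mat \<Rightarrow> 'a poly mat \<Rightarrow> bool" where
  "hermite_normal_form_of F H \<longleftrightarrow> is_hermite_form H \<and>
     (\<exists>U. unimodular U \<and> dim_row U = dim_col F \<and> H = F * U)"

text \<open>Shifted column degree of column j of P with shift t (over the nonzero entries;
  a zero column has degree -infinity, which never occurs in a column-reduced matrix).\<close>
definition cdeg_shift :: "(nat \<Rightarrow> int) \<Rightarrow> 'a::field poly mat \<Rightarrow> nat \<Rightarrow> int" where
  "cdeg_shift t P j = Max {int (degree (P $$ (i,j))) + t i | i. i < dim_row P \<and> P $$ (i,j) \<noteq> 0}"

text \<open>Leading coefficient matrix of x^t P: entry (i,j) is the coefficient of
  x^(c_j - t_i) in p_ij, where c_j is the t-column degree of column j.\<close>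
definition lcoeff_mat_shift :: "(nat \<Rightarrow> int) \<Rightarrow> 'a::field poly mat \<Rightarrow> 'a mat" where
  "lcoeff_mat_shift t P = mat (dim_row P) (dim_col P) (\<lambda>(i,j).
      if P $$ (i,j) \<noteq> 0 \<and> int (degree (P $$ (i,j))) + t i = cdeg_shift t P j
      then lead_coeff (P $$ (i,j)) else 0)"

definition full_column_rank :: "'a::field mat \<Rightarrow> bool" where
  "full_column_rank L \<longleftrightarrow>
     (\<forall>v \<in> carrier_vec (dim_col L). L *\<^sub>v v = 0\<^sub>v (dim_row L) \<longrightarrow> v = 0\<^sub>v (dim_col L))"

definition column_reduced_shift :: "(nat \<Rightarrow> int) \<Rightarrow> 'a::field poly mat \<Rightarrow> bool" where
  "column_reduced_shift t P \<longleftrightarrow> full_column_rank (lcoeff_mat_shift t P)"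

definition column_reduced :: "'a::field poly mat \<Rightarrow> bool" where
  "column_reduced P \<longleftrightarrow> column_reduced_shift (\<lambda>_. 0) P"

definition right_kernel_basis :: "'a::field poly mat \<Rightarrow> 'a poly mat \<Rightarrow> bool" where
  "right_kernel_basis A N \<longleftrightarrow>
     dim_row N = dim_col A \<and>
     A * N = 0\<^sub>m (dim_row A) (dim_col N) \<and>
     (\<forall>c \<in> carrier_vec (dim_col N). N *\<^sub>v c = 0\<^sub>v (dim_row N) \<longrightarrow> c = 0\<^sub>v (dim_col N)) \<and>
     (\<forall>q \<in> carrier_vec (dim_col A). A *\<^sub>v q = 0\<^sub>v (dim_row A) \<longrightarrow>
        (\<exists>c \<in> carrier_vec (dim_col N). q = N *\<^sub>v c))"

definition minimal_right_kernel_basis ::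
    "(nat \<Rightarrow> int) \<Rightarrow> 'a::field poly mat \<Rightarrow> 'a poly mat \<Rightarrow> bool" where
  "minimal_right_kernel_basis t A N \<longleftrightarrow> right_kernel_basis A N \<and> column_reduced_shift t N"

definition row_degree_is :: "'a::field poly mat \<Rightarrow> nat \<Rightarrow> nat \<Rightarrow> bool" where
  "row_degree_is A i d \<longleftrightarrow> (\<exists>j < dim_col A. A $$ (i,j) \<noteq> 0) \<and>
     Max {degree (A $$ (i,j)) | j. j < dim_col A \<and> A $$ (i,j) \<noteq> 0} = d"

end

theory Submission imports Defs begin

lemma cdeg_fin: "finite {int (degree (P $$ (i,j))) + t i | i. i < dim_row P \<and> P $$ (i,j) \<noteq> 0}"
proof -
  have "{int (degree (P $$ (i,j))) + t i | i. i < dim_row P \<and> P $$ (i,j) \<noteq> 0}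
     \<subseteq> (\<lambda>i. int (degree (P $$ (i,j))) + t i) ` {..<dim_row P}" by auto
  thus ?thesis by (rule finite_subset) auto
qed

lemma cdeg_ge:
  assumes "i < dim_row P" "P $$ (i,j) \<noteq> 0"
  shows "int (degree (P $$ (i,j))) + t i \<le> cdeg_shift t P j"
  unfolding cdeg_shift_def by (rule Max_ge[OF cdeg_fin]) (use assms in auto)

lemma col_nonzero:
  assumes cr: "column_reduced_shift t P" and j: "j < dim_col P"
  shows "\<exists>i<dim_row P. P $$ (i,j) \<noteq> 0"
proof (rule ccontr)
  assume nz: "\<not> ?thesis"
  let ?L = "lcoeff_mat_shift t P"
  let ?v = "unit_vec (dim_col P) j :: 'a vec"
  have "?L *\<^sub>v ?v = 0\<^sub>v (dim_row ?L)"
  proof (rule eq_vecI)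
    fix i assume i: "i < dim_vec (0\<^sub>v (dim_row ?L) :: 'a vec)"
    hence i': "i < dim_row P" by (simp add: lcoeff_mat_shift_def)
    have "(?L *\<^sub>v ?v) $ i = row ?L i \<bullet> ?v" using i by simp
    also have "\<dots> = (\<Sum>l\<in>{0..<dim_col P}. (if l = j then ?L $$ (i,l) else 0))"
      unfolding scalar_prod_def using i' by (intro sum.cong) (auto simp: lcoeff_mat_shift_def unit_vec_def)
    also have "\<dots> = ?L $$ (i,j)" using j by simp
    also have "\<dots> = 0" using nz i' j by (auto simp: lcoeff_mat_shift_def)
    finally show "(?L *\<^sub>v ?v) $ i = 0\<^sub>v (dim_row ?L) $ i" using i by simp
  qed simp
  moreover have "?v \<in> carrier_vec (dim_col ?L)" by (simp add: lcoeff_mat_shift_def)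
  ultimately have "?v = 0\<^sub>v (dim_col ?L)" using cr
    unfolding column_reduced_shift_def full_column_rank_def by blast
  hence "?v $ j = 0" using j by (simp add: lcoeff_mat_shift_def)
  thus False using j by simp
qed

lemma det_zero_row:
  assumes A: "A \<in> carrier_mat n n" and k: "k < n" and z: "\<And>j. j < n \<Longrightarrow> A $$ (k,j) = 0"
  shows "det A = 0"
proof -
  have "det A = (\<Sum> p \<in> {p. p permutes {0 ..< n}}. signof p * (\<Prod> i = 0 ..< n. A $$ (i, p i)))"
    by (rule det_def'[OF A])
  also have "\<dots> = 0"
  proof (rule sum.neutral, clarify)
    fix p assume p: "p permutes {0..<n}"
    have "p k < n" using p k by (meson atLeastLessThan_iff permutes_in_image zero_le)
    hence "(\<Prod> i = 0 ..< n. A $$ (i, p i)) = 0" using k z by (intro prod_zero bexI[of _ k]) auto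
    thus "signof p * (\<Prod> i = 0 ..< n. A $$ (i, p i)) = 0" by simp
  qed
  finally show ?thesis .
qed

lemma det_degree_le:
  fixes A :: "'a::field poly mat"
  assumes A: "A \<in> carrier_mat n n" and r: "\<And>i j. i < n \<Longrightarrow> j < n \<Longrightarrow> degree (A $$ (i,j)) \<le> r i"
  shows "degree (det A) \<le> (\<Sum>i<n. r i)"
proof -
  have "det A = (\<Sum> p \<in> {p. p permutes {0 ..< n}}. signof p * (\<Prod> i = 0 ..< n. A $$ (i, p i)))"
    by (rule det_def'[OF A])
  also have "degree \<dots> \<le> (\<Sum>i<n. r i)"
  proof (rule degree_sum_le, simp add: finite_permutations, clarify)
    fix p assume p: "p permutes {0..<n}"
    have "degree (signof p * (\<Prod> i = 0 ..< n. A $$ (i, p i))) \<le> degree (signof p :: 'a poly) + degree (\<Prod> i = 0 ..< n. A $$ (i, p i))"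
      by (rule degree_mult_le)
    also have "degree (signof p :: 'a poly) = 0" by (simp add: sign_def)
    also have "degree (\<Prod> i = 0 ..< n. A $$ (i, p i)) \<le> (\<Sum> i = 0 ..< n. degree (A $$ (i, p i)))"
      using degree_prod_sum_le[of "{0..<n}" "\<lambda>i. A $$ (i, p i)"] by (simp add: o_def)
    also have "\<dots> \<le> (\<Sum> i = 0 ..< n. r i)"
    proof (rule sum_mono)
      fix i assume i: "i \<in> {0..<n}"
      have "p i < n" using p i by (meson atLeastLessThan_iff permutes_in_image zero_le)
      thus "degree (A $$ (i, p i)) \<le> r i" using r i by auto
    qed
    finally show "degree (signof p * (\<Prod> i = 0 ..< n. A $$ (i, p i))) \<le> (\<Sum>i<n. r i)"
      by (simp add: atLeast0LessThan)
  qed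
  finally show ?thesis .
qed

lemma const_of_mult_one:
  fixes X Y :: "'a::field poly mat"
  assumes X: "X \<in> carrier_mat n n" and Y: "Y \<in> carrier_mat n n" and XY: "X * Y = 1\<^sub>m n"
  shows "det X \<noteq> 0 \<and> degree (det X) = 0"
proof -
  have "det X * det Y = 1" using det_mult[OF X Y] XY by simp
  hence "det X \<noteq> 0" "det Y \<noteq> 0" by auto
  moreover have "degree (det X) + degree (det Y) = 0"
    using degree_mult_eq[OF calculation] \<open>det X * det Y = 1\<close> by simp
  ultimately show ?thesis by simp
qed

lemma pred_deg:
  fixes P :: "'a::field poly mat"
  assumes cr: "column_reduced_shift t P" and w: "w \<in> carrier_vec (dim_col P)"
    and k: "k < dim_col P" and wk: "w $ k \<noteq> 0"
  shows "\<exists>i<dim_row P. (P *\<^sub>v w) $ i \<noteq> 0 \<and>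
     cdeg_shift t P k + int (degree (w $ k)) \<le> int (degree ((P *\<^sub>v w) $ i)) + t i"
proof (rule ccontr)
  assume neg: "\<not> ?thesis"
  define d where "d = cdeg_shift t P"
  define m where "m = dim_col P"
  define S where "S = {l. l < m \<and> w $ l \<noteq> 0}"
  define D where "D = Max ((\<lambda>l. d l + int (degree (w $ l))) ` S)"
  have finS: "finite S" unfolding S_def by auto
  have kS: "k \<in> S" unfolding S_def m_def using k wk by auto
  have Dge: "\<And>l. l \<in> S \<Longrightarrow> d l + int (degree (w $ l)) \<le> D"
    unfolding D_def using finS by (intro Max_ge) auto
  have "D \<in> (\<lambda>l. d l + int (degree (w $ l))) ` S"
    unfolding D_def using finS kS by (intro Max_in) auto
  then obtain l0 where l0: "l0 \<in> S" "d l0 + int (degree (w $ l0)) = D" by auto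
  have small: "\<And>i. i < dim_row P \<Longrightarrow> (P *\<^sub>v w) $ i \<noteq> 0 \<Longrightarrow> int (degree ((P *\<^sub>v w) $ i)) + t i < D"
  proof -
    fix i assume i: "i < dim_row P" and nz: "(P *\<^sub>v w) $ i \<noteq> 0"
    have "\<not> (d k + int (degree (w $ k)) \<le> int (degree ((P *\<^sub>v w) $ i)) + t i)"
      using neg i nz unfolding d_def by blast
    thus "int (degree ((P *\<^sub>v w) $ i)) + t i < D" using Dge[OF kS] by linarith
  qed
  define v where "v = vec m (\<lambda>l. if w $ l \<noteq> 0 \<and> d l + int (degree (w $ l)) = D then lead_coeff (w $ l) else 0)"
  let ?L = "lcoeff_mat_shift t P"
  have Lij: "\<And>i l. i < dim_row P \<Longrightarrow> l < m \<Longrightarrow> ?L $$ (i,l) =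
     (if P $$ (i,l) \<noteq> 0 \<and> int (degree (P $$ (i,l))) + t i = d l then lead_coeff (P $$ (i,l)) else 0)"
    unfolding lcoeff_mat_shift_def d_def m_def by simp
  have vl: "\<And>l. l < m \<Longrightarrow> v $ l = (if w $ l \<noteq> 0 \<and> d l + int (degree (w $ l)) = D then lead_coeff (w $ l) else 0)"
    unfolding v_def by simp
  have Pd: "\<And>i l. i < dim_row P \<Longrightarrow> P $$ (i,l) \<noteq> 0 \<Longrightarrow> int (degree (P$$(i,l))) + t i \<le> d l"
    unfolding d_def by (rule cdeg_ge)
  have Lv0: "?L *\<^sub>v v = 0\<^sub>v (dim_row ?L)"
  proof (rule eq_vecI)
    fix i assume "i < dim_vec (0\<^sub>v (dim_row ?L) :: 'a vec)"
    hence i: "i < dim_row P" by (simp add: lcoeff_mat_shift_def)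
    have Lv: "(?L *\<^sub>v v) $ i = (\<Sum>l\<in>{0..<m}. ?L $$ (i,l) * v $ l)"
      using i by (simp add: scalar_prod_def m_def v_def lcoeff_mat_shift_def)
    have "(?L *\<^sub>v v) $ i = 0"
    proof (cases "D - t i < 0")
      case True
      have "(\<Sum>l\<in>{0..<m}. ?L $$ (i,l) * v $ l) = 0"
      proof (rule sum.neutral, rule ballI)
        fix l assume "l \<in> {0..<m}"
        hence l: "l < m" by simp
        show "?L $$ (i,l) * v $ l = 0"
        proof (rule ccontr)
          assume "?L $$ (i,l) * v $ l \<noteq> 0"
          hence "?L $$ (i,l) \<noteq> 0" "v $ l \<noteq> 0" by auto
          hence "P $$ (i,l) \<noteq> 0 \<and> int (degree (P $$ (i,l))) + t i = d l"
            "w $ l \<noteq> 0 \<and> d l + int (degree (w $ l)) = D"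
            using Lij[OF i l] vl[OF l] by (auto split: if_splits)
          thus False using True by linarith
        qed
      qed
      thus ?thesis using Lv by simp
    next
      case False
      define e where "e = nat (D - t i)"
      have eD: "int e = D - t i" using False unfolding e_def by simp
      have Pw: "(P *\<^sub>v w) $ i = (\<Sum>l\<in>{0..<m}. P $$ (i,l) * w $ l)"
        using i w by (simp add: scalar_prod_def m_def)
      have c0: "coeff ((P *\<^sub>v w) $ i) e = 0"
      proof (cases "(P *\<^sub>v w) $ i = 0")
        case False
        from small[OF i False] eD have "degree ((P *\<^sub>v w) $ i) < e" by linarith
        thus ?thesis by (rule coeff_eq_0)
      qed simp
      have trm: "coeff (P $$ (i,l) * w $ l) e = ?L $$ (i,l) * v $ l" if l: "l < m" for l
      proof (cases "P $$ (i,l) = 0 \<or> w $ l = 0")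
        case True
        thus ?thesis using Lij[OF i l] vl[OF l] by auto
      next
        case False
        hence Pnz: "P $$ (i,l) \<noteq> 0" and wnz: "w $ l \<noteq> 0" by auto
        have lS: "l \<in> S" unfolding S_def using l wnz by auto
        have a: "int (degree (P$$(i,l))) + t i \<le> d l" by (rule Pd[OF i Pnz])
        have b: "d l + int (degree (w $ l)) \<le> D" by (rule Dge[OF lS])
        show ?thesis
        proof (cases "degree (P$$(i,l)) + degree (w $ l) = e")
          case True
          hence "int (degree (P $$ (i,l))) + t i = d l" "d l + int (degree (w $ l)) = D"
            using a b eD by linarith+
          hence "?L $$ (i,l) * v $ l = lead_coeff (P $$ (i,l)) * lead_coeff (w $ l)"
            using Lij[OF i l] vl[OF l] Pnz wnz by simp
          also have "\<dots> = coeff (P $$ (i,l) * w $ l) e"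
            using coeff_mult_degree_sum[of "P $$ (i,l)" "w $ l"] True by simp
          finally show ?thesis by simp
        next
          case neq: False
          have lt: "degree (P$$(i,l)) + degree (w $ l) < e" using a b eD neq by linarith
          have "coeff (P $$ (i,l) * w $ l) e = 0"
            by (rule coeff_eq_0, rule le_less_trans[OF degree_mult_le lt])
          moreover have "?L $$ (i,l) * v $ l = 0"
          proof (rule ccontr)
            assume "?L $$ (i,l) * v $ l \<noteq> 0"
            hence "?L $$ (i,l) \<noteq> 0" "v $ l \<noteq> 0" by auto
            hence "int (degree (P $$ (i,l))) + t i = d l"
              "d l + int (degree (w $ l)) = D"
              using Lij[OF i l] vl[OF l] by (auto split: if_splits)
            thus False using neq eD by linarith
          qed
          ultimately show ?thesis by simp
        qed
      qed
      have "0 = (\<Sum>l\<in>{0..<m}. coeff (P $$ (i,l) * w $ l) e)"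
        using c0 Pw by (simp add: coeff_sum)
      also have "\<dots> = (\<Sum>l\<in>{0..<m}. ?L $$ (i,l) * v $ l)"
        by (rule sum.cong) (auto simp: trm)
      finally show ?thesis using Lv by simp
    qed
    thus "(?L *\<^sub>v v) $ i = 0\<^sub>v (dim_row ?L) $ i" using i by (simp add: lcoeff_mat_shift_def)
  qed (simp add: lcoeff_mat_shift_def)
  have vc: "v \<in> carrier_vec (dim_col ?L)" unfolding v_def m_def by (simp add: lcoeff_mat_shift_def)
  have "v = 0\<^sub>v (dim_col ?L)" using cr Lv0 vc
    unfolding column_reduced_shift_def full_column_rank_def by blast
  moreover have "l0 < m" "w $ l0 \<noteq> 0" using l0 unfolding S_def by auto
  ultimately show False using vl[of l0] l0 by (simp add: lcoeff_mat_shift_def m_def)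
qed

lemma split_sum:
  fixes F :: "'a::field poly mat"
  assumes i: "i < n"
  shows "(\<Sum>l\<in>{0..<2*n}. (mat n (2 * n) (\<lambda>(i,j). if j < n then F $$ (i,j) else - (1\<^sub>m n) $$ (i, j - n))) $$ (i,l) * g l)
     = (\<Sum>l\<in>{0..<n}. F $$ (i,l) * g l) - g (i + n)"
proof -
  let ?A = "mat n (2 * n) (\<lambda>(i,j). if j < n then F $$ (i,j) else - (1\<^sub>m n) $$ (i, j - n))"
  let ?f = "\<lambda>l. ?A $$ (i,l) * g l"
  have "sum ?f {0..<2*n} = sum ?f {0..<n} + sum ?f {n..<2*n}"
    by (rule sum.atLeastLessThan_concat[symmetric]) auto
  also have "sum ?f {0..<n} = (\<Sum>l\<in>{0..<n}. F $$ (i,l) * g l)"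
    using i by (intro sum.cong) auto
  also have "sum ?f {n..<2*n} = sum ?f {0+n..<n+n}" by (simp add: mult_2)
  also have "\<dots> = (\<Sum>l\<in>{0..<n}. ?f (l + n))" by (rule sum.shift_bounds_nat_ivl)
  also have "\<dots> = (\<Sum>l\<in>{0..<n}. if l = i then - g (i + n) else 0)"
    using i by (intro sum.cong) auto
  also have "\<dots> = - g (i + n)" using i by simp
  finally show ?thesis by simp
qed

lemma mult_cols:
  fixes X :: "'a::field poly mat"
  assumes X: "X \<in> carrier_mat n n" and cf: "\<And>j. j < n \<Longrightarrow> cf j \<in> carrier_vec n"
    and i: "i < n" and j: "j < n"
  shows "(X * mat n n (\<lambda>(i,j). cf j $ i)) $$ (i,j) = (X *\<^sub>v cf j) $ i"
  using X cf[OF j] i j by (simp add: scalar_prod_def)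

theorem mainTheorem2:
  fixes F H N :: "'a::field poly mat" and n :: nat
  assumes "F \<in> carrier_mat n n"
    and "nonsingular F"
    and "column_reduced F"
    and "hermite_normal_form_of F H"
    and "N \<in> carrier_mat (2 * n) n"
    and "minimal_right_kernel_basis
           (\<lambda>i. if i < n then - int (Max {degree (H $$ (k,k)) | k. k < n})
                 else - int (degree (H $$ (i - n, i - n))))
           (mat n (2 * n) (\<lambda>(i,j). if j < n then F $$ (i,j) else - (1\<^sub>m n) $$ (i, j - n)))
           N"
  shows "unimodular (mat n n (\<lambda>(i,j). N $$ (i,j)))
    \<and> (\<forall>i<n. row_degree_is (mat n n (\<lambda>(i,j). N $$ (i + n, j))) i (degree (H $$ (i,i))))
    \<and> (\<exists>V. unimodular V \<and> V \<in> carrier_mat n n \<and>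
           mat n n (\<lambda>(i,j). N $$ (i + n, j)) = H * V)"
proof -
  note Fc = assms(1) and Nc = assms(5)
  define smax where "smax = Max {degree (H $$ (k,k)) | k. k < n}"
  define t where "t = (\<lambda>i. if i < n then - int smax else - int (degree (H $$ (i - n, i - n))))"
  define A where "A = mat n (2 * n) (\<lambda>(i,j). if j < n then F $$ (i,j) else - (1\<^sub>m n) $$ (i, j - n))"
  define Nu where "Nu = mat n n (\<lambda>(i,j). N $$ (i,j))"
  define Nd where "Nd = mat n n (\<lambda>(i,j). N $$ (i + n, j))"
  have kb: "right_kernel_basis A N" and crN: "column_reduced_shift t N"
    using assms(6) unfolding minimal_right_kernel_basis_def t_def smax_def A_def by auto
  obtain U where Uu: "unimodular U" and Ur: "dim_row U = n" and HFU: "H = F * U"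
    and herm: "is_hermite_form H"
    using assms(4) Fc unfolding hermite_normal_form_of_def by auto
  have Uc: "U \<in> carrier_mat n n" using Uu Ur unfolding unimodular_def square_mat.simps carrier_mat_def by auto
  have Hc: "H \<in> carrier_mat n n" using HFU Fc Uc by simp
  have Nuc: "Nu \<in> carrier_mat n n" and Ndc: "Nd \<in> carrier_mat n n" unfolding Nu_def Nd_def by auto
  have Ac: "A \<in> carrier_mat n (2*n)" unfolding A_def by simp
  have AN0: "A * N = 0\<^sub>m n n" using kb Ac Nc unfolding right_kernel_basis_def by auto
  have NdF: "Nd = F * Nu"
  proof (rule eq_matI)
    fix i j assume ij: "i < dim_row (F * Nu)" "j < dim_col (F * Nu)"
    hence i: "i < n" and j: "j < n" using Fc Nuc by auto
    have "0 = (A * N) $$ (i,j)" using AN0 i j by simp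
    also have "\<dots> = (\<Sum>l\<in>{0..<2*n}. A $$ (i,l) * N $$ (l,j))"
      using Ac Nc i j by (simp add: scalar_prod_def)
    also have "\<dots> = (\<Sum>l\<in>{0..<n}. F $$ (i,l) * N $$ (l,j)) - N $$ (i + n, j)"
      unfolding A_def by (rule split_sum[OF i])
    also have "(\<Sum>l\<in>{0..<n}. F $$ (i,l) * N $$ (l,j)) = (F * Nu) $$ (i,j)"
      using Fc i j by (simp add: scalar_prod_def Nu_def)
    finally show "Nd $$ (i,j) = (F * Nu) $$ (i,j)" using i j by (simp add: Nd_def)
  qed (use Fc Nuc in \<open>auto simp: Nd_def\<close>)
  have K: "\<exists>c\<in>carrier_vec n. (\<forall>i<n. (N *\<^sub>v c) $ i = v $ i) \<and> (\<forall>i<n. (N *\<^sub>v c) $ (i + n) = (F *\<^sub>v v) $ i)"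
    if v: "v \<in> carrier_vec n" for v
  proof -
    define q where "q = vec (2*n) (\<lambda>i. if i < n then v $ i else (F *\<^sub>v v) $ (i - n))"
    have qc: "q \<in> carrier_vec (dim_col A)" using Ac unfolding q_def by simp
    have "A *\<^sub>v q = 0\<^sub>v (dim_row A)"
    proof (rule eq_vecI)
      fix i assume "i < dim_vec (0\<^sub>v (dim_row A) :: 'a poly vec)"
      hence i: "i < n" using Ac by simp
      have "(A *\<^sub>v q) $ i = (\<Sum>l\<in>{0..<2*n}. A $$ (i,l) * q $ l)"
        using Ac i unfolding q_def by (simp add: scalar_prod_def)
      also have "\<dots> = (\<Sum>l\<in>{0..<n}. F $$ (i,l) * q $ l) - q $ (i + n)"
        unfolding A_def by (rule split_sum[OF i])
      also have "(\<Sum>l\<in>{0..<n}. F $$ (i,l) * q $ l) = (F *\<^sub>v v) $ i"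
        using Fc i v unfolding q_def by (simp add: scalar_prod_def)
      also have "q $ (i + n) = (F *\<^sub>v v) $ i" using i unfolding q_def by simp
      finally show "(A *\<^sub>v q) $ i = 0\<^sub>v (dim_row A) $ i" using i Ac by simp
    qed (use Ac in auto)
    then obtain c where c: "c \<in> carrier_vec (dim_col N)" "q = N *\<^sub>v c"
      using kb qc unfolding right_kernel_basis_def by blast
    show ?thesis
    proof (intro bexI conjI allI impI)
      show "c \<in> carrier_vec n" using c Nc by simp
      fix i assume i: "i < n"
      show "(N *\<^sub>v c) $ i = v $ i" using c(2)[symmetric] i unfolding q_def by simp
    next
      fix i assume i: "i < n"
      show "(N *\<^sub>v c) $ (i + n) = (F *\<^sub>v v) $ i" using c(2)[symmetric] i unfolding q_def by simp
    qed
  qed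
  have NuN: "(Nu *\<^sub>v c) $ i = (N *\<^sub>v c) $ i" if "c \<in> carrier_vec n" "i < n" for c i
    using that Nc unfolding Nu_def by (simp add: scalar_prod_def)
  have "\<forall>k. \<exists>c. k < n \<longrightarrow> c \<in> carrier_vec n \<and> (\<forall>i<n. (N *\<^sub>v c) $ i = unit_vec n k $ i)"
  proof
    fix k
    obtain c where "c \<in> carrier_vec n" "\<forall>i<n. (N *\<^sub>v c) $ i = unit_vec n k $ i"
      using K[OF unit_vec_carrier[of n k]] by blast
    thus "\<exists>c. k < n \<longrightarrow> c \<in> carrier_vec n \<and> (\<forall>i<n. (N *\<^sub>v c) $ i = unit_vec n k $ i)" by blast
  qed
  then obtain cf where cf: "\<And>k. k < n \<Longrightarrow> cf k \<in> carrier_vec n \<and> (\<forall>i<n. (N *\<^sub>v cf k) $ i = unit_vec n k $ i)"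
    by metis
  define C1 where "C1 = mat n n (\<lambda>(i,j). cf j $ i)"
  have C1c: "C1 \<in> carrier_mat n n" unfolding C1_def by simp
  have "Nu * C1 = 1\<^sub>m n"
  proof (rule eq_matI)
    fix i j assume "i < dim_row (1\<^sub>m n :: 'a poly mat)" "j < dim_col (1\<^sub>m n :: 'a poly mat)"
    hence i: "i < n" and j: "j < n" by auto
    have "(Nu * C1) $$ (i,j) = (Nu *\<^sub>v cf j) $ i"
      unfolding C1_def by (rule mult_cols[OF Nuc _ i j]) (use cf in auto)
    also have "\<dots> = unit_vec n j $ i" using NuN[of "cf j" i] cf[OF j] i by auto
    finally show "(Nu * C1) $$ (i,j) = 1\<^sub>m n $$ (i,j)" using i j by simp
  qed (use Nuc C1c in auto)
  from const_of_mult_one[OF Nuc C1c this]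
  have detNu: "det Nu \<noteq> 0" "degree (det Nu) = 0" by auto
  have part1: "unimodular Nu" unfolding unimodular_def using detNu Nuc by auto
  have detU: "det U \<noteq> 0" "degree (det U) = 0" using Uu unfolding unimodular_def by auto
  define a where "a = coeff (det U) 0"
  have a: "det U = [:a:]" unfolding a_def using detU(2) by (metis degree_0_id)
  have a0: "a \<noteq> 0" using a detU(1) by auto
  define W where "W = [:inverse a:] \<cdot>\<^sub>m adj_mat U"
  have Wc: "W \<in> carrier_mat n n" unfolding W_def using adj_mat(1)[OF Uc] by simp
  have UW: "U * W = 1\<^sub>m n"
  proof -
    have "U * W = [:inverse a:] \<cdot>\<^sub>m (U * adj_mat U)"
      unfolding W_def using Uc adj_mat(1)[OF Uc] by (simp add: mult_smult_distrib)
    also have "\<dots> = [:inverse a:] \<cdot>\<^sub>m (det U \<cdot>\<^sub>m 1\<^sub>m n)" using adj_mat(2)[OF Uc] by simp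
    also have "\<dots> = ([:inverse a:] * det U) \<cdot>\<^sub>m 1\<^sub>m n" by (intro eq_matI) auto
    also have "[:inverse a:] * det U = 1" using a a0 by (simp add: one_pCons)
    also have "(1::'a poly) \<cdot>\<^sub>m 1\<^sub>m n = 1\<^sub>m n" by (intro eq_matI) auto
    finally show ?thesis .
  qed
  define V where "V = W * Nu"
  have Vc: "V \<in> carrier_mat n n" unfolding V_def using Wc Nuc by simp
  have "U * V = (U * W) * Nu" unfolding V_def using assoc_mult_mat[OF Uc Wc Nuc] by simp
  hence UV: "U * V = Nu" using UW left_mult_one_mat[OF Nuc] by simp
  have "H * V = F * (U * V)" unfolding HFU using assoc_mult_mat[OF Fc Uc Vc] .
  hence NdHV: "Nd = H * V" using NdF UV by simp
  have "det U * det V = det Nu" using det_mult[OF Uc Vc] UV by simp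
  hence detV0: "det V \<noteq> 0" using detNu by auto
  have detV: "det V \<noteq> 0" "degree (det V) = 0"
    using detV0 \<open>det U * det V = det Nu\<close> detNu detU degree_mult_eq[of "det U" "det V"] by auto
  have part3: "\<exists>V. unimodular V \<and> V \<in> carrier_mat n n \<and> Nd = H * V"
    using Vc detV NdHV unfolding unimodular_def by auto
  define s where "s = (\<lambda>i. degree (H $$ (i,i)))"
  have Hlow: "\<And>i j. i < j \<Longrightarrow> j < n \<Longrightarrow> H $$ (i,j) = 0"
    using herm Hc unfolding is_hermite_form_def by auto
  have Hlead: "\<And>i. i < n \<Longrightarrow> lead_coeff (H $$ (i,i)) = 1"
    using herm Hc unfolding is_hermite_form_def by auto
  have Hdeg: "\<And>i j. j < i \<Longrightarrow> i < n \<Longrightarrow> H $$ (i,j) = 0 \<or> degree (H $$ (i,j)) < degree (H $$ (i,i))"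
    using herm Hc unfolding is_hermite_form_def by auto
  have Hd: "degree (H $$ (i,j)) \<le> s i" if "i < n" "j < n" "H $$ (i,j) \<noteq> 0" for i j
  proof -
    consider "i < j" | "i = j" | "j < i" by linarith
    thus ?thesis using Hlow Hdeg that unfolding s_def by cases fastforce+
  qed
  have smax: "s i \<le> smax" if "i < n" for i
    unfolding smax_def s_def using that
    by (intro Max_ge) auto
  have Udeg: "degree (U $$ (i,j)) \<le> smax" if i: "i < n" and j: "j < n" and nz: "U $$ (i,j) \<noteq> 0" for i j
  proof -
    have crF: "column_reduced_shift (\<lambda>_. 0) F" using assms(3) unfolding column_reduced_def .
    have w: "col U j \<in> carrier_vec (dim_col F)" using col_dim[of U j] Uc Fc by simp
    have wi: "col U j $ i \<noteq> 0" using nz i j Uc by simp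
    obtain i' where i': "i' < dim_row F" "(F *\<^sub>v col U j) $ i' \<noteq> 0"
      "cdeg_shift (\<lambda>_. 0) F i + int (degree (col U j $ i)) \<le> int (degree ((F *\<^sub>v col U j) $ i')) + 0"
      using pred_deg[OF crF w _ wi] i Fc by auto
    have FH: "(F *\<^sub>v col U j) $ i' = H $$ (i',j)"
    proof -
      have "(F *\<^sub>v col U j) $ i' = col (F * U) j $ i'" using col_mult2[OF Fc Uc j] by simp
      also have "\<dots> = H $$ (i',j)" using HFU i' j Fc Uc by simp
      finally show ?thesis .
    qed
    obtain i'' where i'': "i'' < dim_row F" "F $$ (i'',i) \<noteq> 0" using col_nonzero[OF crF] i Fc by auto
    have "int (degree (F $$ (i'',i))) + 0 \<le> cdeg_shift (\<lambda>_. 0) F i" by (rule cdeg_ge[OF i''])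
    hence "0 \<le> cdeg_shift (\<lambda>_. 0) F i" by linarith
    moreover have "degree (H $$ (i',j)) \<le> smax"
      using Hd[of i' j] smax[of i'] i' FH Fc j by auto
    ultimately show ?thesis using i'(3) FH i j Uc by simp
  qed
  have "\<forall>j. \<exists>c. j < n \<longrightarrow> c \<in> carrier_vec n \<and> (\<forall>i<n. (N *\<^sub>v c) $ i = col U j $ i)
        \<and> (\<forall>i<n. (N *\<^sub>v c) $ (i + n) = (F *\<^sub>v col U j) $ i)"
  proof
    fix j
    have "col U j \<in> carrier_vec n" using col_dim[of U j] Uc by simp
    from K[OF this] show "\<exists>c. j < n \<longrightarrow> c \<in> carrier_vec n \<and> (\<forall>i<n. (N *\<^sub>v c) $ i = col U j $ i)
        \<and> (\<forall>i<n. (N *\<^sub>v c) $ (i + n) = (F *\<^sub>v col U j) $ i)" by blast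
  qed
  then obtain cu where cu: "\<And>j. j < n \<Longrightarrow> cu j \<in> carrier_vec n \<and> (\<forall>i<n. (N *\<^sub>v cu j) $ i = col U j $ i)
        \<and> (\<forall>i<n. (N *\<^sub>v cu j) $ (i + n) = (F *\<^sub>v col U j) $ i)" by metis
  have cuU: "(N *\<^sub>v cu j) $ i = U $$ (i,j)" if "i < n" "j < n" for i j
    using cu[of j] that Uc by simp
  have cuH: "(N *\<^sub>v cu j) $ (i + n) = H $$ (i,j)" if i: "i < n" and j: "j < n" for i j
  proof -
    have "(N *\<^sub>v cu j) $ (i + n) = (F *\<^sub>v col U j) $ i" using cu[OF j] i by blast
    also have "\<dots> = col (F * U) j $ i" using col_mult2[OF Fc Uc j] by simp
    also have "\<dots> = H $$ (i,j)" using HFU i j Fc Uc by simp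
    finally show ?thesis .
  qed
  define C where "C = mat n n (\<lambda>(i,j). cu j $ i)"
  have Cc: "C \<in> carrier_mat n n" unfolding C_def by simp
  have "Nu * C = U"
  proof (rule eq_matI)
    fix i j assume "i < dim_row U" "j < dim_col U"
    hence i: "i < n" and j: "j < n" using Uc by auto
    have "(Nu * C) $$ (i,j) = (Nu *\<^sub>v cu j) $ i"
      unfolding C_def by (rule mult_cols[OF Nuc _ i j]) (use cu in auto)
    also have "\<dots> = U $$ (i,j)" using NuN[of "cu j" i] cu[OF j] cuU i j by auto
    finally show "(Nu * C) $$ (i,j) = U $$ (i,j)" .
  qed (use Nuc Cc Uc in auto)
  hence "det Nu * det C = det U" using det_mult[OF Nuc Cc] by simp
  hence detC: "det C \<noteq> 0" using detU by auto
  have Crow: "\<exists>j<n. cu j $ k \<noteq> 0" if k: "k < n" for k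
  proof (rule ccontr)
    assume "\<not> ?thesis"
    hence "det C = 0" using det_zero_row[OF Cc k] k unfolding C_def by auto
    thus False using detC by simp
  qed
  have cdeg0: "cdeg_shift t N k \<le> 0" if k: "k < n" for k
  proof -
    obtain j where j: "j < n" "cu j $ k \<noteq> 0" using Crow[OF k] by auto
    have w: "cu j \<in> carrier_vec (dim_col N)" using cu[OF j(1)] Nc by simp
    obtain i where i: "i < dim_row N" "(N *\<^sub>v cu j) $ i \<noteq> 0"
      "cdeg_shift t N k + int (degree (cu j $ k)) \<le> int (degree ((N *\<^sub>v cu j) $ i)) + t i"
      using pred_deg[OF crN w _ j(2)] k Nc by auto
    have "int (degree ((N *\<^sub>v cu j) $ i)) + t i \<le> 0"
    proof (cases "i < n")
      case True
      thus ?thesis using cuU[OF True j(1)] Udeg[OF True j(1)] i(2) unfolding t_def by simp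
    next
      case False
      define i0 where "i0 = i - n"
      have i0: "i0 < n" "i = i0 + n" using False i(1) Nc unfolding i0_def by auto
      thus ?thesis using cuH[OF i0(1) j(1)] Hd[OF i0(1) j(1)] i(2) False unfolding t_def s_def by simp
    qed
    thus ?thesis using i(3) by linarith
  qed
  have Ndd: "degree (Nd $$ (i,k)) \<le> s i" if i: "i < n" and k: "k < n" for i k
  proof (cases "Nd $$ (i,k) = 0")
    case False
    hence nz: "N $$ (i + n, k) \<noteq> 0" using i k unfolding Nd_def by simp
    have "int (degree (N $$ (i + n, k))) + t (i + n) \<le> cdeg_shift t N k"
      by (rule cdeg_ge) (use i Nc nz in auto)
    thus ?thesis using cdeg0[OF k] i k unfolding t_def s_def Nd_def by simp
  qed simp
  have detH: "det H = (\<Prod>i = 0..<n. H $$ (i,i))"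
    using det_lower_triangular[OF _ Hc] Hlow prod_list_diag_prod[of H] Hc by auto
  have Hii: "H $$ (i,i) \<noteq> 0" if "i < n" for i using Hlead[OF that] by auto
  have degH: "degree (det H) = (\<Sum>i = 0..<n. s i)"
    unfolding detH s_def by (rule degree_prod_eq_sum_degree) (use Hii in auto)
  have detNd: "det Nd = det H * det V" using det_mult[OF Hc Vc] NdHV by simp
  have detH0: "det H \<noteq> 0" unfolding detH using Hii by auto
  have detNd0: "det Nd \<noteq> 0" using detNd detH0 detV by auto
  have degNd: "degree (det Nd) = (\<Sum>i<n. s i)"
    using detNd degree_mult_eq[OF detH0 detV(1)] degH detV(2) by (simp add: atLeast0LessThan)
  have part2: "row_degree_is Nd i (s i)" if i: "i < n" for i
  proof -
    let ?M = "{degree (Nd $$ (i,j)) | j. j < dim_col Nd \<and> Nd $$ (i,j) \<noteq> 0}"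
    have ex: "\<exists>j < dim_col Nd. Nd $$ (i,j) \<noteq> 0"
    proof (rule ccontr)
      assume "\<not> ?thesis"
      hence "det Nd = 0" using det_zero_row[OF Ndc i] Ndc by auto
      thus False using detNd0 by simp
    qed
    have fin: "finite ?M"
    proof -
      have "?M \<subseteq> (\<lambda>j. degree (Nd $$ (i,j))) ` {..<dim_col Nd}" by auto
      thus ?thesis by (rule finite_subset) auto
    qed
    have ne: "?M \<noteq> {}" using ex by auto
    have le: "Max ?M \<le> s i" using fin ne Ndd i Ndc by (subst Max_le_iff) auto
    have "\<not> Max ?M < s i"
    proof
      assume lt: "Max ?M < s i"
      define r where "r = s(i := Max ?M)"
      have "degree (det Nd) \<le> (\<Sum>l<n. r l)"
      proof (rule det_degree_le[OF Ndc])
        fix l j assume l: "l < n" and j: "j < n"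
        show "degree (Nd $$ (l,j)) \<le> r l"
        proof (cases "l = i")
          case True
          show ?thesis
          proof (cases "Nd $$ (l,j) = 0")
            case False
            thus ?thesis using True j Ndc fin unfolding r_def by (auto intro!: Max_ge)
          qed simp
        qed (use Ndd l j in \<open>auto simp: r_def\<close>)
      qed
      also have "(\<Sum>l<n. r l) < (\<Sum>l<n. s l)"
        by (rule sum_strict_mono_ex1) (use lt i in \<open>auto simp: r_def\<close>)
      finally show False using degNd by simp
    qed
    hence "Max ?M = s i" using le by linarith
    thus ?thesis unfolding row_degree_is_def using ex by simp
  qed
  show ?thesis using part1 part2 part3 unfolding Nu_def Nd_def s_def by auto
qed

end
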